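(* Let $k\ge2$ and $\ell\ge1$ be integers. Let $\Omega_u$ be the set of satisfying assignments of the unrestricted depth-$\ell$ gadget and $\Omega_r$ the set of satisfying assignments of the restricted depth-$\ell$ gadget (on the same variable set). Then $\Omega_r\subseteq\Omega_u$ and $$1-2^{-(k-2)\ell}\le\frac{|\Omega_r|}{|\Omega_u|}\le1-2^{-k\ell}.$$
   Context: Gadgets: take variables $U=\{v_{i,j}: i\in[\ell],j\in[k]\}$ ($\ell$ layers of $k$ variables). For each $i\in\{1,\dots,\ell-1\}$ and $j\in[k]$ let $c_{ij}$ be the clause with $\mathrm{vbl}(c_{ij})=\{v_{i,r}:r\ne j\}\cup\{v_{i+1,j}\}$, forbidding the all-True assignment of these variables if $i$ is odd and the all-False assignment if $i$ is even; let $\mathcal C$ be the set of these $k(\ell-1)$ clauses. Let $c$ be the clause on the first layer $\{v_{1,j}:j\in[k]\}$ forbidding the all-True assignment. The unrestricted depth-$\ell$ gadget is the CNF $(U,\mathcal C)$; the restricted depth-$\ell$ gadget is $(U,\mathcal C\cup\{c\})$. *)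

theory Defs
  imports Complex_Main "HOL-Library.FuncSet"
begin

text \<open>Variable v_{i,j} is represented by the pair (i,j), with i in {1..l}, j in {1..k}.\<close>

definition gvars :: "nat \<Rightarrow> nat \<Rightarrow> (nat \<times> nat) set" where
  "gvars k l = {1..l} \<times> {1..k}"

definition cvbl :: "nat \<Rightarrow> nat \<Rightarrow> nat \<Rightarrow> (nat \<times> nat) set" where
  "cvbl k i j = {(i, r) | r. r \<in> {1..k} \<and> r \<noteq> j} \<union> {(i + 1, j)}"

definition sat_clause :: "((nat \<times> nat) \<Rightarrow> bool) \<Rightarrow> (nat \<times> nat) set \<Rightarrow> bool \<Rightarrow> bool" where
  "sat_clause \<sigma> V b \<longleftrightarrow> \<not> (\<forall>x\<in>V. \<sigma> x = b)"

definition sat_C :: "nat \<Rightarrow> nat \<Rightarrow> ((nat \<times> nat) \<Rightarrow> bool) \<Rightarrow> bool" where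
  "sat_C k l \<sigma> \<longleftrightarrow> (\<forall>i\<in>{1..l-1}. \<forall>j\<in>{1..k}. sat_clause \<sigma> (cvbl k i j) (odd i))"

definition sat_c :: "nat \<Rightarrow> ((nat \<times> nat) \<Rightarrow> bool) \<Rightarrow> bool" where
  "sat_c k \<sigma> \<longleftrightarrow> sat_clause \<sigma> ({1} \<times> {1..k}) True"

definition Omega_u :: "nat \<Rightarrow> nat \<Rightarrow> ((nat \<times> nat) \<Rightarrow> bool) set" where
  "Omega_u k l = {\<sigma> \<in> gvars k l \<rightarrow>\<^sub>E (UNIV :: bool set). sat_C k l \<sigma>}"

definition Omega_r :: "nat \<Rightarrow> nat \<Rightarrow> ((nat \<times> nat) \<Rightarrow> bool) set" where
  "Omega_r k l = {\<sigma> \<in> gvars k l \<rightarrow>\<^sub>E (UNIV :: bool set). sat_C k l \<sigma> \<and> sat_c k \<sigma>}"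

end

theory Submission
  imports Defs
begin

definition alt :: "nat \<Rightarrow> nat \<Rightarrow> (nat \<times> nat) \<Rightarrow> bool" where
  "alt k l = (\<lambda>x. if x \<in> gvars k l then odd (fst x) else undefined)"

lemma fin_gvars: "finite (gvars k l)"
  unfolding gvars_def by simp

lemma card_gvars: "card (gvars k l) = l * k"
  unfolding gvars_def by (simp add: card_cartesian_product)

lemma fin_u: "finite (Omega_u k l)"
proof -
  have "Omega_u k l \<subseteq> gvars k l \<rightarrow>\<^sub>E (UNIV :: bool set)" unfolding Omega_u_def by auto
  moreover have "finite (gvars k l \<rightarrow>\<^sub>E (UNIV :: bool set))"
    by (rule finite_PiE) (auto simp: fin_gvars)
  ultimately show ?thesis by (rule finite_subset)
qed

lemma card_u_le: "card (Omega_u k l) \<le> 2 ^ (k * l)"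
proof -
  have "Omega_u k l \<subseteq> gvars k l \<rightarrow>\<^sub>E (UNIV :: bool set)" unfolding Omega_u_def by auto
  moreover have f: "finite (gvars k l \<rightarrow>\<^sub>E (UNIV :: bool set))"
    by (rule finite_PiE) (auto simp: fin_gvars)
  ultimately have "card (Omega_u k l) \<le> card (gvars k l \<rightarrow>\<^sub>E (UNIV :: bool set))"
    by (rule card_mono[rotated])
  also have "\<dots> = 2 ^ (k * l)"
    by (simp add: card_PiE fin_gvars card_gvars mult.commute)
  finally show ?thesis .
qed

lemma alt_in:
  assumes "l \<ge> 1"
  shows "alt k l \<in> Omega_u k l" "\<not> sat_c k (alt k l) \<or> k = 0"
proof -
  show "alt k l \<in> Omega_u k l"
    unfolding Omega_u_def sat_C_def sat_clause_def cvbl_def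
  proof (intro CollectI conjI ballI)
    show "alt k l \<in> gvars k l \<rightarrow>\<^sub>E UNIV" unfolding alt_def by auto
  next
    fix i j assume i: "i \<in> {1..l-1}" and j: "j \<in> {1..k}"
    have "(i+1, j) \<in> gvars k l" using i j assms unfolding gvars_def by auto
    then have "alt k l (i+1, j) \<noteq> odd i" unfolding alt_def by simp
    then show "\<not> (\<forall>x\<in>{(i, r) |r. r \<in> {1..k} \<and> r \<noteq> j} \<union> {(i + 1, j)}. alt k l x = odd i)"
      by auto
  qed
  show "\<not> sat_c k (alt k l) \<or> k = 0"
    unfolding sat_c_def sat_clause_def alt_def gvars_def using assms by auto
qed

lemma unique:
  assumes "\<sigma> \<in> Omega_u k l" "\<not> sat_c k \<sigma>"
  shows "\<sigma> = alt k l"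
proof -
  have pie: "\<sigma> \<in> gvars k l \<rightarrow>\<^sub>E UNIV" and C: "sat_C k l \<sigma>"
    using assms(1) unfolding Omega_u_def by auto
  have L1: "\<forall>j\<in>{1..k}. \<sigma> (1, j) = True" using assms(2) unfolding sat_c_def sat_clause_def by auto
  have main: "\<forall>j\<in>{1..k}. \<sigma> (i, j) = odd i" if "1 \<le> i" "i \<le> l" for i
    using that
  proof (induction i rule: dec_induct)
    case base then show ?case using L1 by simp
  next
    case (step n)
    show ?case
    proof
      fix j assume j: "j \<in> {1..k}"
      have "n \<in> {1..l-1}" using step by auto
      with C j have "sat_clause \<sigma> (cvbl k n j) (odd n)" unfolding sat_C_def by auto
      moreover have "\<forall>r\<in>{1..k}. \<sigma> (n, r) = odd n" using step by auto
      ultimately have "\<sigma> (n+1, j) \<noteq> odd n" unfolding sat_clause_def cvbl_def by auto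
      then show "\<sigma> (Suc n, j) = odd (Suc n)" by simp
    qed
  qed
  show ?thesis
  proof
    fix x
    show "\<sigma> x = alt k l x"
    proof (cases "x \<in> gvars k l")
      case True
      then obtain i j where x: "x = (i,j)" "i \<in> {1..l}" "j \<in> {1..k}" unfolding gvars_def by auto
      then show ?thesis using main[of i] True unfolding alt_def by auto
    next
      case False
      have "\<sigma> x = undefined" by (rule PiE_arb[OF pie False])
      then show ?thesis using False unfolding alt_def by simp
    qed
  qed
qed

lemma card_rel:
  assumes "k \<ge> 1" "l \<ge> 1"
  shows "card (Omega_u k l) = card (Omega_r k l) + 1" "Omega_r k l \<subseteq> Omega_u k l"
proof -
  have eq: "Omega_r k l = Omega_u k l - {alt k l}"
  proof
    show "Omega_r k l \<subseteq> Omega_u k l - {alt k l}"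
      using alt_in[OF assms(2)] assms(1) unfolding Omega_r_def Omega_u_def by auto
    show "Omega_u k l - {alt k l} \<subseteq> Omega_r k l"
      using unique unfolding Omega_r_def by (auto simp: Omega_u_def)
  qed
  have "alt k l \<in> Omega_u k l" using alt_in[OF assms(2)] by simp
  then show "card (Omega_u k l) = card (Omega_r k l) + 1"
    unfolding eq using fin_u
    by (metis Suc_eq_plus1 card.remove)
  show "Omega_r k l \<subseteq> Omega_u k l" unfolding eq by auto
qed

lemma card_u_ge:
  assumes "k \<ge> 2" "l \<ge> 1"
  shows "2 ^ ((k - 2) * l) \<le> card (Omega_u k l)"
proof -
  define B where "B = (\<lambda>x::nat\<times>nat. if snd x = 1 then {True} else if snd x = 2 then {False} else (UNIV::bool set))"
  have sub: "PiE (gvars k l) B \<subseteq> Omega_u k l"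
  proof
    fix \<sigma> assume s: "\<sigma> \<in> PiE (gvars k l) B"
    have v: "\<And>i j. i \<in> {1..l} \<Longrightarrow> j \<in> {1..k} \<Longrightarrow> \<sigma> (i,j) \<in> B (i,j)"
      using s unfolding gvars_def by (auto simp: PiE_def Pi_def)
    have "sat_C k l \<sigma>" unfolding sat_C_def sat_clause_def
    proof (intro ballI notI)
      fix i j assume i: "i \<in> {1..l-1}" and j: "j \<in> {1..k}" and all: "\<forall>x\<in>cvbl k i j. \<sigma> x = odd i"
      have i1: "i \<in> {1..l}" "i+1 \<in> {1..l}" using i by auto
      have one: "1 \<in> {1..k}" and two: "2 \<in> {1..k}" using assms by auto
      show False
      proof (cases "j = 1")
        case True
        have "(i,2) \<in> cvbl k i j" "(i+1,1) \<in> cvbl k i j" using True two unfolding cvbl_def by auto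
        moreover have "\<sigma> (i,2) = False" "\<sigma> (i+1,1) = True"
          using v[OF i1(1) two] v[OF i1(2) one] unfolding B_def by auto
        ultimately show False using all by force
      next
        case F1: False
        show False
        proof (cases "j = 2")
          case True
          have "(i,1) \<in> cvbl k i j" "(i+1,2) \<in> cvbl k i j" using True one unfolding cvbl_def by auto
          moreover have "\<sigma> (i,1) = True" "\<sigma> (i+1,2) = False"
            using v[OF i1(1) one] v[OF i1(2) two] unfolding B_def by auto
          ultimately show False using all by force
        next
          case False
          have "(i,1) \<in> cvbl k i j" "(i,2) \<in> cvbl k i j" using False F1 one two unfolding cvbl_def by auto
          moreover have "\<sigma> (i,1) = True" "\<sigma> (i,2) = False"
            using v[OF i1(1) one] v[OF i1(1) two] unfolding B_def by auto
          ultimately show False using all by force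
        qed
      qed
    qed
    moreover have "\<sigma> \<in> gvars k l \<rightarrow>\<^sub>E UNIV" using s by (auto simp: PiE_def Pi_def)
    ultimately show "\<sigma> \<in> Omega_u k l" unfolding Omega_u_def by auto
  qed
  have "card (PiE (gvars k l) B) = (\<Prod>x\<in>gvars k l. card (B x))"
    by (simp add: card_PiE fin_gvars)
  also have "\<dots> = (\<Prod>i\<in>{1..l}. \<Prod>j\<in>{1..k}. card (B (i,j)))"
    unfolding gvars_def by (simp add: prod.cartesian_product)
  also have "\<dots> = (\<Prod>i\<in>{1..l}. (2::nat) ^ (k - 2))"
  proof (rule prod.cong[OF refl])
    fix i
    have "{1..k} = {1,2} \<union> {3..k}" using assms by auto
    then have "(\<Prod>j\<in>{1..k}. card (B (i,j))) = (\<Prod>j\<in>{1,2}. card (B (i,j))) * (\<Prod>j\<in>{3..k}. card (B (i,j)))"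
      by (simp add: prod.union_disjoint)
    also have "\<dots> = 1 * (\<Prod>j\<in>{3..k}. 2)"
      by (intro arg_cong2[where f="(*)"] prod.cong) (auto simp: B_def)
    also have "\<dots> = 2 ^ (k - 2)" by simp
    finally show "(\<Prod>j\<in>{1..k}. card (B (i,j))) = 2 ^ (k - 2)" .
  qed
  also have "\<dots> = 2 ^ ((k - 2) * l)" by (simp add: power_mult)
  finally have "card (PiE (gvars k l) B) = 2 ^ ((k - 2) * l)" .
  with card_mono[OF fin_u sub] show ?thesis by simp
qed

theorem lemma5p5:
  fixes k l :: nat
  assumes "k \<ge> 2" and "l \<ge> 1"
  shows "Omega_r k l \<subseteq> Omega_u k l \<and>
    1 - 1 / (2::real) ^ ((k - 2) * l) \<le> real (card (Omega_r k l)) / real (card (Omega_u k l)) \<and>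
    real (card (Omega_r k l)) / real (card (Omega_u k l)) \<le> 1 - 1 / (2::real) ^ (k * l)"
proof -
  have k1: "k \<ge> 1" using assms by simp
  define N where "N = card (Omega_u k l)"
  have cr: "card (Omega_r k l) = N - 1" "N \<ge> 1" using card_rel(1)[OF k1 assms(2)] unfolding N_def by auto
  have ratio: "real (card (Omega_r k l)) / real N = 1 - 1 / real N"
    using cr by (simp add: of_nat_diff field_simps)
  have lo: "(2::real) ^ ((k - 2) * l) \<le> real N"
    using card_u_ge[OF assms] unfolding N_def by (metis of_nat_le_iff of_nat_numeral of_nat_power)
  have hi: "real N \<le> (2::real) ^ (k * l)"
    using card_u_le[of k l] unfolding N_def by (metis of_nat_le_iff of_nat_numeral of_nat_power)
  have Npos: "real N > 0" using cr by simp
  have "1 / real N \<le> 1 / (2::real) ^ ((k - 2) * l)"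
    using lo Npos by (intro divide_left_mono) auto
  moreover have "1 / (2::real) ^ (k * l) \<le> 1 / real N"
    using hi Npos by (intro divide_left_mono) auto
  ultimately show ?thesis
    using card_rel(2)[OF k1 assms(2)] ratio unfolding N_def by linarith
qed

end
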